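(* (Setting as in the context.) It holds that $$\mathcal F_{p+1}\mathcal F_{p+1}^*+\sigma^{-1}\Sigma_{f_{p+1}}+\begin{pmatrix}\widehat{\mathcal T}_{f_p}&0\\0&\mathcal T_{\theta_p}\end{pmatrix}\succ0\iff \mathcal F\mathcal F^*+\sigma^{-1}\Sigma_f+\mathcal T_f\succ0,$$ $$\mathcal G_{q+1}\mathcal G_{q+1}^*+\sigma^{-1}\Sigma_{g_{q+1}}+\begin{pmatrix}\widehat{\mathcal T}_{g_q}&0\\0&\mathcal T_{\varphi_q}\end{pmatrix}\succ0\iff \mathcal G\mathcal G^*+\sigma^{-1}\Sigma_g+\mathcal T_g\succ0.$$
   Context: Let $p,q\ge1$ be integers, $\mathcal U,\mathcal V,\mathcal X,\mathcal Y_i,\mathcal Z_j$ real finite-dimensional Euclidean spaces; $\mathcal F:\mathcal X\to\mathcal U$, $\mathcal G:\mathcal X\to\mathcal V$, $\mathcal A_i:\mathcal X\to\mathcal Y_i$ ($i=1..p$), $\mathcal B_j:\mathcal X\to\mathcal Z_j$ ($j=1..q$) linear; $\sigma>0$; $\mathcal P_i,\mathcal Q_j$ self-adjoint positive semidefinite on $\mathcal Y_i,\mathcal Z_j$; $\Sigma_f,\Sigma_g$ self-adjoint positive semidefinite on $\mathcal U,\mathcal V$ (in the paper, the operators with $\langle\xi-\tilde\xi,u-\tilde u\rangle\ge\|u-\tilde u\|^2_{\Sigma_f}$ for subgradients of closed proper convex $f$, and likewise for $g$). $\mathcal E_{\theta_i}\succ0$ self-adjoint with $\mathcal E_{\theta_i}\succeq\sigma^{-1}\mathcal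 P_i+\mathcal A_i\mathcal A_i^*$, $\mathcal T_{\theta_i}:=\mathcal E_{\theta_i}-\sigma^{-1}\mathcal P_i-\mathcal A_i\mathcal A_i^*$; $\mathcal E_{\varphi_j}\succ0$ self-adjoint with $\mathcal E_{\varphi_j}\succeq\sigma^{-1}\mathcal Q_j+\mathcal B_j\mathcal B_j^*$, $\mathcal T_{\varphi_j}:=\mathcal E_{\varphi_j}-\sigma^{-1}\mathcal Q_j-\mathcal B_j\mathcal B_j^*$. $\mathcal T_f,\mathcal T_g$ self-adjoint positive semidefinite. $\mathcal F_1:=\mathcal F$, $\mathcal F_{i+1}x:=(\mathcal Fx,\mathcal A_1x,\dots,\mathcal A_ix)$; $\widehat{\mathcal T}_{f_1}:=\mathcal T_f+\mathcal F_1\mathcal A_1^*\mathcal E_{\theta_1}^{-1}\mathcal A_1\mathcal F_1^*$, $\widehat{\mathcal T}_{f_i}:=\mathrm{diag}(\widehat{\mathcal T}_{f_{i-1}},\mathcal T_{\theta_{i-1}})+\mathcal F_i\mathcal A_i^*\mathcal E_{\theta_i}^{-1}\mathcal A_i\mathcal F_i^*$ ($i=2..p$); $\Sigma_{f_1}:=\Sigma_f$, $\Sigma_{f_i}:=\mathrm{diag}(\Sigma_{f_{i-1}},\mathcal P_{i-1})$ ($i=2..p+1$). Analogously $\mathcal G_1:=\mathcal G$, $\mathcal G_{j+1}x:=(\mathcal Gx,\mathcal B_1x,\dots,\mathcal B_jx)$; $\widehat{\mathcal T}_{g_1}:=\mathcal T_g+\mathcal G_1\mathcal B_1^*\mathcal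 E_{\varphi_1}^{-1}\mathcal B_1\mathcal G_1^*$, $\widehat{\mathcal T}_{g_j}:=\mathrm{diag}(\widehat{\mathcal T}_{g_{j-1}},\mathcal T_{\varphi_{j-1}})+\mathcal G_j\mathcal B_j^*\mathcal E_{\varphi_j}^{-1}\mathcal B_j\mathcal G_j^*$ ($j=2..q$); $\Sigma_{g_1}:=\Sigma_g$, $\Sigma_{g_j}:=\mathrm{diag}(\Sigma_{g_{j-1}},\mathcal Q_{j-1})$ ($j=2..q+1$). $\succ0$ means positive definite. *)

theory Defs
  imports "Jordan_Normal_Form.Gauss_Jordan_Elimination"
begin

(* Linear operators between finite-dimensional real Euclidean spaces are
   represented by real matrices (w.r.t. orthonormal bases); the adjoint is
   the transpose. *)

definition psd_mat :: "real mat \<Rightarrow> bool" where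
  "psd_mat M \<longleftrightarrow> dim_row M = dim_col M \<and> transpose_mat M = M \<and>
     (\<forall>v \<in> carrier_vec (dim_row M). 0 \<le> scalar_prod v (M *\<^sub>v v))"

definition pd_mat :: "real mat \<Rightarrow> bool" where
  "pd_mat M \<longleftrightarrow> dim_row M = dim_col M \<and> transpose_mat M = M \<and>
     (\<forall>v \<in> carrier_vec (dim_row M). v \<noteq> 0\<^sub>v (dim_row M) \<longrightarrow> 0 < scalar_prod v (M *\<^sub>v v))"

definition minv :: "real mat \<Rightarrow> real mat" where
  "minv E = the (mat_inverse E)"

definition vstack :: "real mat \<Rightarrow> real mat \<Rightarrow> real mat" where
  "vstack M N = mat (dim_row M + dim_row N) (dim_col M)
     (\<lambda>(i,j). if i < dim_row M then M $$ (i,j) else N $$ (i - dim_row M, j))"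

definition bdiag :: "real mat \<Rightarrow> real mat \<Rightarrow> real mat" where
  "bdiag M N = four_block_mat M (0\<^sub>m (dim_row M) (dim_col N)) (0\<^sub>m (dim_row N) (dim_col M)) N"

(* Fstk F A i = F_i, i >= 1:  F_1 = F, F_{i+1} x = (F x, A_1 x, ..., A_i x).
   The value at 0 is irrelevant. *)
fun Fstk :: "real mat \<Rightarrow> (nat \<Rightarrow> real mat) \<Rightarrow> nat \<Rightarrow> real mat" where
  "Fstk F A 0 = F"
| "Fstk F A (Suc 0) = F"
| "Fstk F A (Suc (Suc i)) = vstack (Fstk F A (Suc i)) (A (Suc i))"

fun Sstk :: "real mat \<Rightarrow> (nat \<Rightarrow> real mat) \<Rightarrow> nat \<Rightarrow> real mat" where
  "Sstk S P 0 = S"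
| "Sstk S P (Suc 0) = S"
| "Sstk S P (Suc (Suc i)) = bdiag (Sstk S P (Suc i)) (P (Suc i))"

definition Tth :: "real \<Rightarrow> (nat \<Rightarrow> real mat) \<Rightarrow> (nat \<Rightarrow> real mat) \<Rightarrow> (nat \<Rightarrow> real mat) \<Rightarrow> nat \<Rightarrow> real mat" where
  "Tth \<sigma> P A E i = E i - smult_mat (1 / \<sigma>) (P i) - A i * transpose_mat (A i)"

definition corr :: "real mat \<Rightarrow> (nat \<Rightarrow> real mat) \<Rightarrow> (nat \<Rightarrow> real mat) \<Rightarrow> nat \<Rightarrow> real mat" where
  "corr F A E i = Fstk F A i * transpose_mat (A i) * minv (E i) * A i * transpose_mat (Fstk F A i)"

fun hatT :: "real \<Rightarrow> real mat \<Rightarrow> real mat \<Rightarrow> (nat \<Rightarrow> real mat) \<Rightarrow> (nat \<Rightarrow> real mat) \<Rightarrow> (nat \<Rightarrow> real mat) \<Rightarrow> nat \<Rightarrow> real mat" where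
  "hatT \<sigma> T F A P E 0 = T"
| "hatT \<sigma> T F A P E (Suc 0) = T + corr F A E (Suc 0)"
| "hatT \<sigma> T F A P E (Suc (Suc i)) =
     bdiag (hatT \<sigma> T F A P E (Suc i)) (Tth \<sigma> P A E (Suc i)) + corr F A E (Suc (Suc i))"

end

theory Submission
  imports Defs "Jordan_Normal_Form.Determinant"
begin


lemma quad_form:
  fixes N C X E :: "real mat"
  assumes N: "N \<in> carrier_mat n n" and C: "C \<in> carrier_mat m n"
    and X: "X \<in> carrier_mat m m" and E: "E \<in> carrier_mat m m"
    and EX: "E * X = 1\<^sub>m m" and Es: "transpose_mat E = E"
    and w: "w \<in> carrier_vec n" and y: "y \<in> carrier_vec m"
  shows "(w @\<^sub>v y) \<bullet> (four_block_mat (N + transpose_mat C * X * C) (transpose_mat C) C E *\<^sub>v (w @\<^sub>v y))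
       = w \<bullet> (N *\<^sub>v w) + (y + X *\<^sub>v (C *\<^sub>v w)) \<bullet> (E *\<^sub>v (y + X *\<^sub>v (C *\<^sub>v w)))"
proof -
  define z where "z = C *\<^sub>v w"
  define x where "x = X *\<^sub>v z"
  have z: "z \<in> carrier_vec m" using z_def C w by auto
  have x: "x \<in> carrier_vec m" using x_def X z by auto
  have Ct: "transpose_mat C \<in> carrier_mat n m" using C by auto
  have BXC: "transpose_mat C * X * C \<in> carrier_mat n n" using C X by auto
  have Ex: "E *\<^sub>v x = z"
  proof -
    have "E *\<^sub>v x = (E * X) *\<^sub>v z" using x_def E X z by simp
    thus ?thesis using EX z by simp
  qed
  have "four_block_mat (N + transpose_mat C * X * C) (transpose_mat C) C E *\<^sub>v (w @\<^sub>v y)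
     = ((N + transpose_mat C * X * C) *\<^sub>v w + transpose_mat C *\<^sub>v y) @\<^sub>v (C *\<^sub>v w + E *\<^sub>v y)"
    by (rule four_block_mat_mult_vec[OF _ Ct C E w y], insert N BXC, auto)
  also have "(N + transpose_mat C * X * C) *\<^sub>v w = N *\<^sub>v w + transpose_mat C *\<^sub>v x"
  proof -
    have "(N + transpose_mat C * X * C) *\<^sub>v w = N *\<^sub>v w + (transpose_mat C * X * C) *\<^sub>v w"
      using N BXC w by (simp add: add_mult_distrib_mat_vec)
    also have "(transpose_mat C * X * C) *\<^sub>v w = transpose_mat C *\<^sub>v x"
    proof -
      have CX: "transpose_mat C * X \<in> carrier_mat n m" using X C by auto
      have "(transpose_mat C * X * C) *\<^sub>v w = (transpose_mat C * X) *\<^sub>v z"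
        unfolding z_def by (rule assoc_mult_mat_vec[OF CX C w])
      also have "\<dots> = transpose_mat C *\<^sub>v x"
        unfolding x_def by (rule assoc_mult_mat_vec[OF Ct X z])
      finally show ?thesis .
    qed
    finally show ?thesis .
  qed
  finally have K: "four_block_mat (N + transpose_mat C * X * C) (transpose_mat C) C E *\<^sub>v (w @\<^sub>v y)
     = (N *\<^sub>v w + transpose_mat C *\<^sub>v x + transpose_mat C *\<^sub>v y) @\<^sub>v (z + E *\<^sub>v y)"
    unfolding z_def by simp
  have t1: "w \<bullet> (transpose_mat C *\<^sub>v x) = x \<bullet> z"
  proof -
    have "w \<bullet> (transpose_mat C *\<^sub>v x) = (transpose_mat C *\<^sub>v x) \<bullet> w"
      by (rule comm_scalar_prod[of _ n], insert w Ct x, auto)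
    also have "\<dots> = x \<bullet> (C *\<^sub>v w)" by (rule transpose_vec_mult_scalar[OF C w x])
    finally show ?thesis unfolding z_def .
  qed
  have t2: "w \<bullet> (transpose_mat C *\<^sub>v y) = y \<bullet> z"
  proof -
    have "w \<bullet> (transpose_mat C *\<^sub>v y) = (transpose_mat C *\<^sub>v y) \<bullet> w"
      by (rule comm_scalar_prod[of _ n], insert w Ct y, auto)
    also have "\<dots> = y \<bullet> (C *\<^sub>v w)" by (rule transpose_vec_mult_scalar[OF C w y])
    finally show ?thesis unfolding z_def .
  qed
  have t3: "x \<bullet> (E *\<^sub>v y) = y \<bullet> z"
  proof -
    have "x \<bullet> (E *\<^sub>v y) = (transpose_mat E *\<^sub>v x) \<bullet> y"
      by (rule transpose_vec_mult_scalar[OF E y x, symmetric])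
    also have "\<dots> = z \<bullet> y" using Es Ex by simp
    also have "\<dots> = y \<bullet> z" by (rule comm_scalar_prod[OF z y])
    finally show ?thesis .
  qed
  have t4: "x \<bullet> z = z \<bullet> x" by (rule comm_scalar_prod[OF x z])
  have "(w @\<^sub>v y) \<bullet> ((N *\<^sub>v w + transpose_mat C *\<^sub>v x + transpose_mat C *\<^sub>v y) @\<^sub>v (z + E *\<^sub>v y))
     = w \<bullet> (N *\<^sub>v w + transpose_mat C *\<^sub>v x + transpose_mat C *\<^sub>v y) + y \<bullet> (z + E *\<^sub>v y)"
    by (rule scalar_prod_append[of _ n _ m], insert w y N Ct x z E, auto)
  also have "\<dots> = w \<bullet> (N *\<^sub>v w) + x \<bullet> z + y \<bullet> z + y \<bullet> z + y \<bullet> (E *\<^sub>v y)"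
    using w y N Ct x z E t1 t2
    by (simp add: scalar_prod_add_distrib[of _ n] scalar_prod_add_distrib[of _ m])
  also have "\<dots> = w \<bullet> (N *\<^sub>v w) + (y + x) \<bullet> (E *\<^sub>v (y + x))"
  proof -
    have "(y + x) \<bullet> (E *\<^sub>v (y + x)) = (y + x) \<bullet> (E *\<^sub>v y + z)"
      using E y x Ex by (simp add: mult_add_distrib_mat_vec)
    also have "\<dots> = y \<bullet> (E *\<^sub>v y) + y \<bullet> z + x \<bullet> (E *\<^sub>v y) + x \<bullet> z"
      using E y x z
      by (simp add: scalar_prod_add_distrib[of _ m] add_scalar_prod_distrib[of _ m])
    finally show ?thesis using t3 by simp
  qed
  finally show ?thesis using K unfolding x_def z_def by simp
qed

lemma zero_append_vec: "0\<^sub>v (n + m) = (0\<^sub>v n :: real vec) @\<^sub>v 0\<^sub>v m"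
  by (rule eq_vecI, auto)

lemma pd_nonneg:
  assumes "pd_mat E" "E \<in> carrier_mat m m" "u \<in> carrier_vec m"
  shows "0 \<le> u \<bullet> (E *\<^sub>v u)"
proof (cases "u = 0\<^sub>v m")
  case True thus ?thesis using assms by simp
next
  case False thus ?thesis using assms unfolding pd_mat_def by (auto intro: less_imp_le)
qed

lemma pd_block:
  fixes N C X E :: "real mat"
  assumes N: "N \<in> carrier_mat n n" and C: "C \<in> carrier_mat m n"
    and X: "X \<in> carrier_mat m m" and E: "E \<in> carrier_mat m m"
    and EX: "E * X = 1\<^sub>m m" and Xs: "transpose_mat X = X" and Epd: "pd_mat E"
  shows "pd_mat (four_block_mat (N + transpose_mat C * X * C) (transpose_mat C) C E) \<longleftrightarrow> pd_mat N"
proof -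
  let ?B = "transpose_mat C * X * C"
  let ?K = "four_block_mat (N + ?B) (transpose_mat C) C E"
  have Es: "transpose_mat E = E" using Epd unfolding pd_mat_def by auto
  have Ct: "transpose_mat C \<in> carrier_mat n m" using C by auto
  have B: "?B \<in> carrier_mat n n" using C X by auto
  have Bs: "transpose_mat ?B = ?B"
  proof -
    have CX: "transpose_mat C * X \<in> carrier_mat n m" using C X by auto
    have "transpose_mat ?B = transpose_mat C * transpose_mat (transpose_mat C * X)"
      by (rule transpose_mult[OF CX C])
    also have "transpose_mat (transpose_mat C * X) = transpose_mat X * C"
      using transpose_mult[OF Ct X] by simp
    also have "transpose_mat C * (transpose_mat X * C) = ?B"
      using Xs by (simp add: assoc_mult_mat[OF Ct X C])
    finally show ?thesis .
  qed
  have K: "?K \<in> carrier_mat (n + m) (n + m)" using N B Ct C E by auto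
  have Kt: "transpose_mat ?K = four_block_mat (transpose_mat N + ?B) (transpose_mat C) C E"
    using N B Ct C E Es Bs
    by (simp add: transpose_four_block_mat[of _ n n _ m _ m] transpose_add[of _ n n])
  have sym: "transpose_mat ?K = ?K \<longleftrightarrow> transpose_mat N = N"
  proof
    assume h: "transpose_mat ?K = ?K"
    show "transpose_mat N = N"
    proof (rule eq_matI)
      fix i j assume ij: "i < dim_row N" "j < dim_col N"
      have "transpose_mat ?K $$ (i,j) = ?K $$ (i,j)" using h by simp
      hence "(transpose_mat N + ?B) $$ (i,j) = (N + ?B) $$ (i,j)"
        unfolding Kt using ij N B Ct C E by simp
      moreover have "(transpose_mat N + ?B) $$ (i,j) = transpose_mat N $$ (i,j) + ?B $$ (i,j)"
        using ij N B by (intro index_add_mat, auto)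
      moreover have "(N + ?B) $$ (i,j) = N $$ (i,j) + ?B $$ (i,j)"
        using ij N B by (intro index_add_mat, auto)
      ultimately show "transpose_mat N $$ (i,j) = N $$ (i,j)" by simp
    qed (insert N, auto)
  next
    assume "transpose_mat N = N" thus "transpose_mat ?K = ?K" unfolding Kt by simp
  qed
  have Q: "\<And>w y. w \<in> carrier_vec n \<Longrightarrow> y \<in> carrier_vec m \<Longrightarrow>
     (w @\<^sub>v y) \<bullet> (?K *\<^sub>v (w @\<^sub>v y))
       = w \<bullet> (N *\<^sub>v w) + (y + X *\<^sub>v (C *\<^sub>v w)) \<bullet> (E *\<^sub>v (y + X *\<^sub>v (C *\<^sub>v w)))"
    by (rule quad_form[OF N C X E EX Es])
  have pos: "(\<forall>v \<in> carrier_vec (n + m). v \<noteq> 0\<^sub>v (n + m) \<longrightarrow> 0 < v \<bullet> (?K *\<^sub>v v))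
     \<longleftrightarrow> (\<forall>w \<in> carrier_vec n. w \<noteq> 0\<^sub>v n \<longrightarrow> 0 < w \<bullet> (N *\<^sub>v w))"
  proof
    assume h: "\<forall>v \<in> carrier_vec (n + m). v \<noteq> 0\<^sub>v (n + m) \<longrightarrow> 0 < v \<bullet> (?K *\<^sub>v v)"
    show "\<forall>w \<in> carrier_vec n. w \<noteq> 0\<^sub>v n \<longrightarrow> 0 < w \<bullet> (N *\<^sub>v w)"
    proof (intro ballI impI)
      fix w :: "real vec" assume w: "w \<in> carrier_vec n" and w0: "w \<noteq> 0\<^sub>v n"
      define y where "y = - (X *\<^sub>v (C *\<^sub>v w))"
      have y: "y \<in> carrier_vec m" using y_def X C w by auto
      have yy: "y + X *\<^sub>v (C *\<^sub>v w) = 0\<^sub>v m" unfolding y_def using X C w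
        by (intro eq_vecI, auto)
      have "w @\<^sub>v y \<noteq> 0\<^sub>v (n + m)" unfolding zero_append_vec using w w0 y by simp
      moreover have "w @\<^sub>v y \<in> carrier_vec (n + m)" using w y by simp
      ultimately have "0 < (w @\<^sub>v y) \<bullet> (?K *\<^sub>v (w @\<^sub>v y))" using h by blast
      thus "0 < w \<bullet> (N *\<^sub>v w)" unfolding Q[OF w y] yy using E by simp
    qed
  next
    assume h: "\<forall>w \<in> carrier_vec n. w \<noteq> 0\<^sub>v n \<longrightarrow> 0 < w \<bullet> (N *\<^sub>v w)"
    show "\<forall>v \<in> carrier_vec (n + m). v \<noteq> 0\<^sub>v (n + m) \<longrightarrow> 0 < v \<bullet> (?K *\<^sub>v v)"
      unfolding all_vec_append[of n m]
    proof (intro ballI impI)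
      fix w y :: "real vec" assume w: "w \<in> carrier_vec n" and y: "y \<in> carrier_vec m"
        and nz: "w @\<^sub>v y \<noteq> 0\<^sub>v (n + m)"
      let ?u = "y + X *\<^sub>v (C *\<^sub>v w)"
      have u: "?u \<in> carrier_vec m" using y X C w by auto
      have u0: "0 \<le> ?u \<bullet> (E *\<^sub>v ?u)" by (rule pd_nonneg[OF Epd E u])
      show "0 < (w @\<^sub>v y) \<bullet> (?K *\<^sub>v (w @\<^sub>v y))"
      proof (cases "w = 0\<^sub>v n")
        case False
        hence "0 < w \<bullet> (N *\<^sub>v w)" using h w by blast
        thus ?thesis unfolding Q[OF w y] using u0 by simp
      next
        case True
        have y0: "y \<noteq> 0\<^sub>v m"
        proof
          assume "y = 0\<^sub>v m"
          with nz True show False by (simp add: zero_append_vec)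
        qed
        have c0: "C *\<^sub>v w = 0\<^sub>v m" using True C by (intro eq_vecI, auto)
        have x0: "X *\<^sub>v 0\<^sub>v m = 0\<^sub>v m" using X by (intro eq_vecI, auto)
        have "?u = y" unfolding c0 x0 using y by simp
        hence "0 < ?u \<bullet> (E *\<^sub>v ?u)" using Epd E y y0 unfolding pd_mat_def by auto
        moreover have "w \<bullet> (N *\<^sub>v w) = 0" using True N by simp
        ultimately show ?thesis unfolding Q[OF w y] by simp
      qed
    qed
  qed
  show ?thesis
  proof -
    have d1: "dim_row ?K = n + m" "dim_col ?K = n + m" using K by auto
    have d2: "dim_row N = n" "dim_col N = n" using N by auto
    show ?thesis unfolding pd_mat_def d1 d2 using sym pos by blast
  qed
qed

lemma minv_props:
  assumes E: "E \<in> carrier_mat m m" and Epd: "pd_mat E"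
  shows "minv E \<in> carrier_mat m m" "E * minv E = 1\<^sub>m m" "minv E * E = 1\<^sub>m m"
    "transpose_mat (minv E) = minv E"
proof -
  have "det E \<noteq> 0"
  proof
    assume "det E = 0"
    then obtain v where v: "v \<in> carrier_vec m" "v \<noteq> 0\<^sub>v m" "E *\<^sub>v v = 0\<^sub>v m"
      using det_0_iff_vec_prod_zero[OF E] by blast
    hence "0 < v \<bullet> (E *\<^sub>v v)" using Epd E unfolding pd_mat_def by auto
    thus False using v by simp
  qed
  hence U: "E \<in> Units (ring_mat TYPE(real) m m)" by (rule det_non_zero_imp_unit[OF E])
  obtain B where B: "mat_inverse E = Some B"
    using mat_inverse(1)[OF E, of m] U by (cases "mat_inverse E", auto)
  have *: "E * B = 1\<^sub>m m" "B * E = 1\<^sub>m m" "B \<in> carrier_mat m m"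
    using mat_inverse(2)[OF E B] by auto
  have mB: "minv E = B" unfolding minv_def B by simp
  show "minv E \<in> carrier_mat m m" "E * minv E = 1\<^sub>m m" "minv E * E = 1\<^sub>m m"
    using * mB by auto
  have Es: "transpose_mat E = E" using Epd unfolding pd_mat_def by auto
  have "transpose_mat B * E = 1\<^sub>m m"
    using transpose_mult[OF E *(3)] *(1) Es by simp
  hence "transpose_mat B = transpose_mat B * (E * B)" using *(1,3) by simp
  also have "\<dots> = (transpose_mat B * E) * B" using *(3) E by simp
  also have "\<dots> = B" using \<open>transpose_mat B * E = 1\<^sub>m m\<close> *(3) by simp
  finally show "transpose_mat (minv E) = minv E" using mB by simp
qed

lemma vstack_four_block:
  assumes "Fi \<in> carrier_mat n k" "Ai \<in> carrier_mat m k"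
  shows "vstack Fi Ai = four_block_mat Fi (0\<^sub>m n 0) Ai (0\<^sub>m m 0)"
  using assms unfolding vstack_def by (intro eq_matI, auto)

lemma step_block:
  fixes Fi Ai S Pm D E X :: "real mat"
  assumes Fi: "Fi \<in> carrier_mat n k" and Ai: "Ai \<in> carrier_mat m k"
    and S: "S \<in> carrier_mat n n" and Pm: "Pm \<in> carrier_mat m m"
    and D: "D \<in> carrier_mat n n" and E: "E \<in> carrier_mat m m" and X: "X \<in> carrier_mat m m"
  shows "vstack Fi Ai * transpose_mat (vstack Fi Ai) + smult_mat c (bdiag S Pm)
     + bdiag (D + Fi * transpose_mat Ai * X * Ai * transpose_mat Fi) (E - smult_mat c Pm - Ai * transpose_mat Ai)
   = four_block_mat ((Fi * transpose_mat Fi + smult_mat c S + D)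
        + transpose_mat (Ai * transpose_mat Fi) * X * (Ai * transpose_mat Fi))
      (transpose_mat (Ai * transpose_mat Fi)) (Ai * transpose_mat Fi) E"
proof -
  have Ft: "transpose_mat Fi \<in> carrier_mat k n" using Fi by auto
  have At: "transpose_mat Ai \<in> carrier_mat k m" using Ai by auto
  have CT: "transpose_mat (Ai * transpose_mat Fi) = Fi * transpose_mat Ai"
    using transpose_mult[OF Ai Ft] by simp
  have V: "vstack Fi Ai = four_block_mat Fi (0\<^sub>m n 0) Ai (0\<^sub>m m 0)"
    by (rule vstack_four_block[OF Fi Ai])
  have Vt: "transpose_mat (vstack Fi Ai) = four_block_mat (transpose_mat Fi) (transpose_mat Ai) (0\<^sub>m 0 n) (0\<^sub>m 0 m)"
    unfolding V using Fi Ai by (simp add: transpose_four_block_mat[of _ n k _ 0 _ m])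
  have VV: "vstack Fi Ai * transpose_mat (vstack Fi Ai) =
     four_block_mat (Fi * transpose_mat Fi) (Fi * transpose_mat Ai) (Ai * transpose_mat Fi) (Ai * transpose_mat Ai)"
  proof -
    have "vstack Fi Ai * transpose_mat (vstack Fi Ai) =
       four_block_mat (Fi * transpose_mat Fi + 0\<^sub>m n 0 * 0\<^sub>m 0 n) (Fi * transpose_mat Ai + 0\<^sub>m n 0 * 0\<^sub>m 0 m)
         (Ai * transpose_mat Fi + 0\<^sub>m m 0 * 0\<^sub>m 0 n) (Ai * transpose_mat Ai + 0\<^sub>m m 0 * 0\<^sub>m 0 m)"
      unfolding Vt unfolding V by (rule mult_four_block_mat, insert Fi Ai, auto)
    also have "\<dots> = four_block_mat (Fi * transpose_mat Fi) (Fi * transpose_mat Ai) (Ai * transpose_mat Fi) (Ai * transpose_mat Ai)"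
      using Fi Ai by (intro cong_four_block_mat; intro eq_matI; simp)
    finally show ?thesis .
  qed
  have H: "Fi * transpose_mat Ai * X * Ai * transpose_mat Fi
     = transpose_mat (Ai * transpose_mat Fi) * X * (Ai * transpose_mat Fi)"
    unfolding CT using Fi Ai X Ft At
    by (subst assoc_mult_mat[of _ n m _ k _ n], auto)
  show ?thesis unfolding VV bdiag_def H CT
    by (intro eq_matI, insert Fi Ai S Pm D E X Ft At, auto)
qed

lemma step_pd:
  fixes Fi Ai S Pm D E :: "real mat"
  assumes Fi: "Fi \<in> carrier_mat n k" and Ai: "Ai \<in> carrier_mat m k"
    and S: "S \<in> carrier_mat n n" and Pm: "Pm \<in> carrier_mat m m"
    and D: "D \<in> carrier_mat n n" and E: "E \<in> carrier_mat m m" and Epd: "pd_mat E"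
  shows "pd_mat (vstack Fi Ai * transpose_mat (vstack Fi Ai) + smult_mat c (bdiag S Pm)
     + bdiag (D + Fi * transpose_mat Ai * minv E * Ai * transpose_mat Fi) (E - smult_mat c Pm - Ai * transpose_mat Ai))
     \<longleftrightarrow> pd_mat (Fi * transpose_mat Fi + smult_mat c S + D)"
proof -
  note mp = minv_props[OF E Epd]
  have C: "Ai * transpose_mat Fi \<in> carrier_mat m n" using Ai Fi by auto
  have N: "Fi * transpose_mat Fi + smult_mat c S + D \<in> carrier_mat n n" using Fi S D by auto
  show ?thesis
    unfolding step_block[OF Fi Ai S Pm D E mp(1)]
    by (rule pd_block[OF N C mp(1) E mp(2) mp(4) Epd])
qed

lemma vstack_carrier: "M \<in> carrier_mat a k \<Longrightarrow> N \<in> carrier_mat b k \<Longrightarrow> vstack M N \<in> carrier_mat (a + b) k"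
  unfolding vstack_def by auto

lemma bdiag_carrier: "M \<in> carrier_mat a a \<Longrightarrow> N \<in> carrier_mat b b \<Longrightarrow> bdiag M N \<in> carrier_mat (a + b) (a + b)"
  unfolding bdiag_def by auto

lemma chain:
  fixes F Tf Sf :: "real mat" and A P E :: "nat \<Rightarrow> real mat"
  assumes F: "F \<in> carrier_mat nu nx"
    and A: "\<And>i. i \<in> {1..p} \<Longrightarrow> A i \<in> carrier_mat (ny i) nx"
    and P: "\<And>i. i \<in> {1..p} \<Longrightarrow> P i \<in> carrier_mat (ny i) (ny i)"
    and E: "\<And>i. i \<in> {1..p} \<Longrightarrow> E i \<in> carrier_mat (ny i) (ny i) \<and> pd_mat (E i)"
    and Sf: "Sf \<in> carrier_mat nu nu" and Tf: "Tf \<in> carrier_mat nu nu"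
  shows "Suc j \<le> p \<Longrightarrow> pd_mat (Fstk F A (Suc j + 1) * transpose_mat (Fstk F A (Suc j + 1))
                  + smult_mat (1 / \<sigma>) (Sstk Sf P (Suc j + 1))
                  + bdiag (hatT \<sigma> Tf F A P E (Suc j)) (Tth \<sigma> P A E (Suc j)))
           \<longleftrightarrow> pd_mat (F * transpose_mat F + smult_mat (1 / \<sigma>) Sf + Tf)"
proof -
  define rr where "rr j = nu + (\<Sum>i\<in>{1..j}. ny i)" for j
  have rrS: "rr (Suc j) = rr j + ny (Suc j)" for j unfolding rr_def by simp
  have Fd: "j \<le> p \<Longrightarrow> Fstk F A (Suc j) \<in> carrier_mat (rr j) nx" for j
  proof (induction j)
    case 0 thus ?case using F unfolding rr_def by simp
  next
    case (Suc j) thus ?case unfolding rrS using A[of "Suc j"] by (simp add: vstack_carrier)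
  qed
  have Sd: "j \<le> p \<Longrightarrow> Sstk Sf P (Suc j) \<in> carrier_mat (rr j) (rr j)" for j
  proof (induction j)
    case 0 thus ?case using Sf unfolding rr_def by simp
  next
    case (Suc j) thus ?case unfolding rrS using P[of "Suc j"] by (simp add: bdiag_carrier)
  qed
  have Td: "i \<in> {1..p} \<Longrightarrow> Tth \<sigma> P A E i \<in> carrier_mat (ny i) (ny i)" for i
    unfolding Tth_def using A[of i] P[of i] E[of i] by auto
  have cd: "Suc j \<le> p \<Longrightarrow> corr F A E (Suc j) \<in> carrier_mat (rr j) (rr j)" for j
  proof -
    assume j: "Suc j \<le> p"
    have "minv (E (Suc j)) \<in> carrier_mat (ny (Suc j)) (ny (Suc j))"
      using minv_props(1)[of "E (Suc j)"] E[of "Suc j"] j by auto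
    thus ?thesis unfolding corr_def using Fd[of j] A[of "Suc j"] j by auto
  qed
  have Hd: "Suc j \<le> p \<Longrightarrow> hatT \<sigma> Tf F A P E (Suc j) \<in> carrier_mat (rr j) (rr j)" for j
  proof (induction j)
    case 0 thus ?case using Tf cd[of 0] unfolding rr_def by simp
  next
    case (Suc j)
    have "bdiag (hatT \<sigma> Tf F A P E (Suc j)) (Tth \<sigma> P A E (Suc j)) \<in> carrier_mat (rr (Suc j)) (rr (Suc j))"
      unfolding rrS using Suc Td[of "Suc j"] by (intro bdiag_carrier, auto)
    thus ?case using cd[of "Suc j"] Suc by simp
  qed
  define D where "D j = (if j = 0 then Tf else bdiag (hatT \<sigma> Tf F A P E j) (Tth \<sigma> P A E j))" for j
  have hD: "hatT \<sigma> Tf F A P E (Suc j) = D j + corr F A E (Suc j)" for j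
    unfolding D_def by (cases j, auto)
  have Dd: "Suc j \<le> p \<Longrightarrow> D j \<in> carrier_mat (rr j) (rr j)" for j
  proof (cases j)
    case 0 thus ?thesis using Tf unfolding D_def rr_def by simp
  next
    case (Suc j')
    assume j: "Suc j \<le> p"
    show ?thesis unfolding D_def Suc rrS using Hd[of j'] Td[of "Suc j'"] j Suc
      by (auto intro: bdiag_carrier)
  qed
  have step: "Suc j \<le> p \<Longrightarrow> pd_mat (Fstk F A (Suc j + 1) * transpose_mat (Fstk F A (Suc j + 1))
                  + smult_mat (1 / \<sigma>) (Sstk Sf P (Suc j + 1))
                  + bdiag (hatT \<sigma> Tf F A P E (Suc j)) (Tth \<sigma> P A E (Suc j)))
       \<longleftrightarrow> pd_mat (Fstk F A (Suc j) * transpose_mat (Fstk F A (Suc j)) + smult_mat (1 / \<sigma>) (Sstk Sf P (Suc j)) + D j)" for j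
  proof -
    assume j: "Suc j \<le> p"
    have Ej: "E (Suc j) \<in> carrier_mat (ny (Suc j)) (ny (Suc j))" "pd_mat (E (Suc j))" using E[of "Suc j"] j by auto
    show ?thesis
      unfolding hD corr_def Tth_def
      using step_pd[OF Fd[of j] A[of "Suc j"] Sd[of j] P[of "Suc j"] Dd[of j] Ej, of "1/\<sigma>"] j
      by simp
  qed
  show "Suc j \<le> p \<Longrightarrow> ?thesis"
  proof (induction j)
    case 0 thus ?case using step[of 0] unfolding D_def by simp
  next
    case (Suc j)
    thus ?case using step[of "Suc j"] unfolding D_def by simp
  qed
qed


theorem proposition3p3:
  fixes p q nx nu nv :: nat and ny nz :: "nat \<Rightarrow> nat" and \<sigma> :: real
    and F G Tf Tg Sf Sg :: "real mat"
    and A B P Q Eth Eph :: "nat \<Rightarrow> real mat"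
  assumes "p \<ge> 1" and "q \<ge> 1" and "\<sigma> > 0"
    and "F \<in> carrier_mat nu nx" and "G \<in> carrier_mat nv nx"
    and "\<And>i. i \<in> {1..p} \<Longrightarrow> A i \<in> carrier_mat (ny i) nx"
    and "\<And>j. j \<in> {1..q} \<Longrightarrow> B j \<in> carrier_mat (nz j) nx"
    and "\<And>i. i \<in> {1..p} \<Longrightarrow> P i \<in> carrier_mat (ny i) (ny i) \<and> psd_mat (P i)"
    and "\<And>j. j \<in> {1..q} \<Longrightarrow> Q j \<in> carrier_mat (nz j) (nz j) \<and> psd_mat (Q j)"
    and "Sf \<in> carrier_mat nu nu" and "psd_mat Sf"
    and "Sg \<in> carrier_mat nv nv" and "psd_mat Sg"
    and "\<And>i. i \<in> {1..p} \<Longrightarrow> Eth i \<in> carrier_mat (ny i) (ny i) \<and> pd_mat (Eth i)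
                            \<and> psd_mat (Tth \<sigma> P A Eth i)"
    and "\<And>j. j \<in> {1..q} \<Longrightarrow> Eph j \<in> carrier_mat (nz j) (nz j) \<and> pd_mat (Eph j)
                            \<and> psd_mat (Tth \<sigma> Q B Eph j)"
    and "Tf \<in> carrier_mat nu nu" and "psd_mat Tf"
    and "Tg \<in> carrier_mat nv nv" and "psd_mat Tg"
  shows "(pd_mat (Fstk F A (p + 1) * transpose_mat (Fstk F A (p + 1))
                  + smult_mat (1 / \<sigma>) (Sstk Sf P (p + 1))
                  + bdiag (hatT \<sigma> Tf F A P Eth p) (Tth \<sigma> P A Eth p))
           \<longleftrightarrow> pd_mat (F * transpose_mat F + smult_mat (1 / \<sigma>) Sf + Tf))
       \<and> (pd_mat (Fstk G B (q + 1) * transpose_mat (Fstk G B (q + 1))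
                  + smult_mat (1 / \<sigma>) (Sstk Sg Q (q + 1))
                  + bdiag (hatT \<sigma> Tg G B Q Eph q) (Tth \<sigma> Q B Eph q))
           \<longleftrightarrow> pd_mat (G * transpose_mat G + smult_mat (1 / \<sigma>) Sg + Tg))"
proof -
  obtain j where pj: "p = Suc j" using assms(1) by (cases p, auto)
  obtain k where qk: "q = Suc k" using assms(2) by (cases q, auto)
  have 1: "pd_mat (Fstk F A (Suc j + 1) * transpose_mat (Fstk F A (Suc j + 1))
                  + smult_mat (1 / \<sigma>) (Sstk Sf P (Suc j + 1))
                  + bdiag (hatT \<sigma> Tf F A P Eth (Suc j)) (Tth \<sigma> P A Eth (Suc j)))
           \<longleftrightarrow> pd_mat (F * transpose_mat F + smult_mat (1 / \<sigma>) Sf + Tf)"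
    by (rule chain[of F nu nx p A ny P Eth Sf Tf j \<sigma>], insert assms pj, auto)
  have 2: "pd_mat (Fstk G B (Suc k + 1) * transpose_mat (Fstk G B (Suc k + 1))
                  + smult_mat (1 / \<sigma>) (Sstk Sg Q (Suc k + 1))
                  + bdiag (hatT \<sigma> Tg G B Q Eph (Suc k)) (Tth \<sigma> Q B Eph (Suc k)))
           \<longleftrightarrow> pd_mat (G * transpose_mat G + smult_mat (1 / \<sigma>) Sg + Tg)"
    by (rule chain[of G nv nx q B nz Q Eph Sg Tg k \<sigma>], insert assms qk, auto)
  show ?thesis using 1 2 pj qk by simp
qed

end
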